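(* Let $M\ge2$, $\mu_1,\dots,\mu_M>0$ and $p_1,\dots,p_{M-1}\in[0,1)$, and let $v_m=\prod_{i=1}^{m-1}p_i/\mu_m$ for $1\le m\le M$ (empty product $=1$), with $\sum_{m=1}^Mv_m=1$. For $2\le m\le M$ let $a_m=\frac{\mu_m}{p_1\mu_1+\mu_m}$ and $b_m=(1-a_m)\bigl(1+\sum_{r=m+1}^M\frac{v_r}{v_1}\bigr)-\frac{a_mv_m}{v_1}$, and let $\xi=\sum_{m=2}^Mb_m\prod_{j=m+1}^Ma_j$ (empty product $=1$, empty sum $=0$). Then $$1-\xi=\mu_1\prod_{m=2}^Ma_m.$$ *)

theory Defs
  imports Complex_Main
begin

text \<open>Indices are 1-based; mu and p are sequences indexed by nat.\<close>

definition vv :: "(nat \<Rightarrow> real) \<Rightarrow> (nat \<Rightarrow> real) \<Rightarrow> nat \<Rightarrow> real" where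
  "vv mu p m = (\<Prod>i\<in>{1..<m}. p i) / mu m"

definition aa :: "(nat \<Rightarrow> real) \<Rightarrow> (nat \<Rightarrow> real) \<Rightarrow> nat \<Rightarrow> real" where
  "aa mu p m = mu m / (p 1 * mu 1 + mu m)"

definition bb :: "nat \<Rightarrow> (nat \<Rightarrow> real) \<Rightarrow> (nat \<Rightarrow> real) \<Rightarrow> nat \<Rightarrow> real" where
  "bb M mu p m = (1 - aa mu p m) * (1 + (\<Sum>r\<in>{m+1..M}. vv mu p r / vv mu p 1))
                 - aa mu p m * vv mu p m / vv mu p 1"

definition xi :: "nat \<Rightarrow> (nat \<Rightarrow> real) \<Rightarrow> (nat \<Rightarrow> real) \<Rightarrow> real" where
  "xi M mu p = (\<Sum>m\<in>{2..M}. bb M mu p m * (\<Prod>j\<in>{m+1..M}. aa mu p j))"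

end

theory Submission
  imports Defs
begin

lemma tele: "1 \<le> (n::nat) \<Longrightarrow> (\<Sum>m\<in>{2..n}. (f m - f (m-1))) = f n - (f 1 :: real)"
proof (induction n rule: dec_induct)
  case base then show ?case by simp
next
  case (step n)
  have "{2..Suc n} = insert (Suc n) {2..n}" using step by auto
  have "f (Suc n - 1) = f n" by simp
  then show ?case using step \<open>{2..Suc n} = _\<close> by simp
qed

theorem lemma9:
  fixes M :: nat and mu p :: "nat \<Rightarrow> real"
  assumes "M \<ge> 2"
    and "\<And>m. 1 \<le> m \<Longrightarrow> m \<le> M \<Longrightarrow> mu m > 0"
    and "\<And>i. 1 \<le> i \<Longrightarrow> i \<le> M - 1 \<Longrightarrow> 0 \<le> p i \<and> p i < 1"
    and "(\<Sum>m\<in>{1..M}. vv mu p m) = 1"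
  shows "1 - xi M mu p = mu 1 * (\<Prod>m\<in>{2..M}. aa mu p m)"
proof -
  define S where "S m = (\<Sum>r\<in>{m..M}. vv mu p r / vv mu p 1)" for m
  define Q where "Q m = (\<Prod>j\<in>{m+1..M}. aa mu p j)" for m
  define f where "f m = (1 + S (m+1)) * Q m" for m
  have mu1: "mu 1 > 0" using assms(1,2) by simp
  have v1: "vv mu p 1 = 1 / mu 1" by (simp add: vv_def)
  have Sstep: "S m = vv mu p m / vv mu p 1 + S (m+1)" if "m \<le> M" for m
  proof -
    have "{m..M} = insert m {m+1..M}" using that by auto
    then show ?thesis unfolding S_def by simp
  qed
  have Qstep: "Q (m-1) = aa mu p m * Q m" if "1 \<le> m" "m \<le> M" for m
  proof -
    have "{m-1+1..M} = insert m {m+1..M}" using that by auto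
    then show ?thesis unfolding Q_def by simp
  qed
  have key: "bb M mu p m * Q m = f m - f (m-1)" if "2 \<le> m" "m \<le> M" for m
  proof -
    have "f (m-1) = (1 + S m) * Q (m-1)" unfolding f_def using that by simp
    also have "\<dots> = (1 + vv mu p m / vv mu p 1 + S (m+1)) * (aa mu p m * Q m)"
      using Sstep[of m] Qstep[of m] that by simp
    finally show ?thesis unfolding f_def bb_def S_def
      by (simp add: algebra_simps)
  qed
  have "xi M mu p = (\<Sum>m\<in>{2..M}. (f m - f (m-1)))"
    unfolding xi_def using key Q_def by (intro sum.cong) auto
  also have "\<dots> = f M - f 1" using assms(1) by (intro tele) simp
  finally have x: "xi M mu p = f M - f 1" .
  have fM: "f M = 1" unfolding f_def S_def Q_def by simp
  have S1: "S 1 = mu 1" unfolding S_def using assms(4) mu1 v1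
    by (simp add: sum_distrib_right[symmetric])
  have "S 1 = 1 + S 2" using Sstep[of 1] assms(1) mu1 v1 by (simp add: numeral_2_eq_2)
  then have "f 1 = mu 1 * (\<Prod>m\<in>{2..M}. aa mu p m)"
    unfolding f_def Q_def using S1 by (simp add: numeral_2_eq_2)
  then show ?thesis using x fM by simp
qed

end
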